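(* Let $(\Omega,\Sigma,\mu)$ be a probability space, let $\|\cdot\|$ be the Luxemburg norm on $L^1(\mu)$ associated to $M$ (defined in the context), and let $X$ be a closed subspace of $L^1(\mu)$. Then for every $\tau>0$, $$\rho_X(\tau)\le 128\,\sup\Big\{\int_\Omega M(\tau g)\,d\mu : g\in X,\ \|g\|_1=1\Big\}.$$
   Context: Let $\varphi(t)=2$ for $0\le t\le1$ and $\varphi(t)=8/(1+t)^2$ for $t>1$, and let $M(t)=\int_0^{|t|}\varphi(u)(|t|-u)\,du$. The Luxemburg norm is $\|f\|=\inf\{\lambda>0:\int_\Omega M(f/\lambda)\,d\mu\le1\}$. The modulus of smoothness of $(X,\|\cdot\|)$ is $\rho_X(\tau)=\sup\{\tfrac{\|x+\tau y\|+\|x-\tau y\|}{2}-1 : x,y\in X,\ \|x\|=\|y\|=1\}$. *)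

theory Defs
  imports "HOL-Probability.Probability"
begin

definition phi :: "real \<Rightarrow> real" where
  "phi t = (if t \<le> 1 then 2 else 8 / (1 + t)^2)"

definition orliczM :: "real \<Rightarrow> real" where
  "orliczM t = integral {0..\<bar>t\<bar>} (\<lambda>u. phi u * (\<bar>t\<bar> - u))"

definition lux_norm :: "'a measure \<Rightarrow> ('a \<Rightarrow> real) \<Rightarrow> real" where
  "lux_norm mu f = Inf {lam. lam > 0 \<and> (\<integral>\<^sup>+ w. ennreal (orliczM (f w / lam)) \<partial>mu) \<le> 1}"

definition l1_norm :: "'a measure \<Rightarrow> ('a \<Rightarrow> real) \<Rightarrow> real" where
  "l1_norm mu g = (\<integral> w. \<bar>g w\<bar> \<partial>mu)"

text \<open>A closed linear subspace of L^1(mu), represented as a set of integrable functions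
  (closed under L^1 limits, hence in particular a union of a.e.-classes).\<close>
definition closed_L1_subspace :: "'a measure \<Rightarrow> ('a \<Rightarrow> real) set \<Rightarrow> bool" where
  "closed_L1_subspace mu X \<longleftrightarrow>
     (\<forall>f\<in>X. integrable mu f) \<and> (\<lambda>w. 0) \<in> X \<and>
     (\<forall>f\<in>X. \<forall>g\<in>X. (\<lambda>w. f w + g w) \<in> X) \<and>
     (\<forall>f\<in>X. \<forall>c::real. (\<lambda>w. c * f w) \<in> X) \<and>
     (\<forall>F g. (\<forall>n. F n \<in> X) \<longrightarrow> integrable mu g \<longrightarrow>
        ((\<lambda>n. \<integral> w. \<bar>F n w - g w\<bar> \<partial>mu) \<longlonglongrightarrow> 0) \<longrightarrow> g \<in> X)"

text \<open>Modulus of smoothness of (X, Luxemburg norm); supremum taken in ereal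
  (so the empty supremum, for X = {0}, is -infinity).\<close>
definition mod_smooth :: "'a measure \<Rightarrow> ('a \<Rightarrow> real) set \<Rightarrow> real \<Rightarrow> ereal" where
  "mod_smooth mu X tau = (SUP p \<in> {(x, y). x \<in> X \<and> y \<in> X \<and> lux_norm mu x = 1 \<and> lux_norm mu y = 1}.
      ereal ((lux_norm mu (\<lambda>w. fst p w + tau * snd p w)
            + lux_norm mu (\<lambda>w. fst p w - tau * snd p w)) / 2 - 1))"

end

theory Submission
  imports Defs
begin

definition Mf :: "real \<Rightarrow> real" where
  "Mf t = (if \<bar>t\<bar> \<le> 1 then t^2 else 6*\<bar>t\<bar> - 5 - 8*ln((1+\<bar>t\<bar>)/2))"
definition Dm :: "real \<Rightarrow> real" where
  "Dm t = (if \<bar>t\<bar> \<le> 1 then 2*t else sgn t * (6 - 8/(1+\<bar>t\<bar>)))"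
definition Ph :: "real \<Rightarrow> real" where
  "Ph t = (if \<bar>t\<bar> \<le> 1 then 2 else 8/(1+\<bar>t\<bar>)^2)"

lemma deriv_split:
  fixes f :: "real \<Rightarrow> real"
  assumes "(f has_real_derivative D) (at x within {..x})"
      and "(f has_real_derivative D) (at x within {x..})"
  shows "(f has_real_derivative D) (at x)"
proof -
  have "{..x} \<union> {x..} = UNIV" by auto
  then have U: "at x = sup (at x within {..x}) (at x within {x..})"
    unfolding at_within_union[symmetric] by simp
  show ?thesis using assms unfolding has_field_derivative_iff
    by (subst U) (rule filterlim_sup)
qed

lemma deriv_within_from:
  fixes f g :: "real \<Rightarrow> real"
  assumes "(g has_real_derivative D) (at x)" "D = E" "x \<in> S" "\<And>y. y \<in> S \<Longrightarrow> dist y x < 1 \<Longrightarrow> f y = g y"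
  shows "(f has_real_derivative E) (at x within S)"
  using has_field_derivative_transform_within[of g D x S 1 f] assms
  by (auto intro: has_field_derivative_at_within)

lemma deriv_open_from:
  fixes f g :: "real \<Rightarrow> real"
  assumes "(g has_real_derivative D) (at x)" "D = E" "open S" "x \<in> S" "\<And>y. y \<in> S \<Longrightarrow> f y = g y"
  shows "(f has_real_derivative E) (at x)"
  using has_field_derivative_transform_within_open[of g D x S f] assms by auto

lemma Mf_deriv: "(Mf has_real_derivative Dm t) (at t)"
proof -
  have sq: "((\<lambda>s. s^2) has_real_derivative 2*t) (at t)"
    by (auto intro!: derivative_eq_intros)
  have pos: "((\<lambda>s. 6 * s - 5 - 8*ln((1+s)/2)) has_real_derivative 6 - 8/(1+t)) (at t)" if "t > -1" for t
    using that by (auto intro!: derivative_eq_intros simp: field_simps)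
  have neg: "((\<lambda>s. -6 * s - 5 - 8*ln((1-s)/2)) has_real_derivative -6 + 8/(1-t)) (at t)" if "t < 1" for t
    using that by (auto intro!: derivative_eq_intros simp: field_simps)
  consider "\<bar>t\<bar> < 1" | "t > 1" | "t < -1" | "t = 1" | "t = -1" by linarith
  then show ?thesis
  proof cases
    case 1
    show ?thesis
      by (rule deriv_open_from[OF sq, where S="{-1<..<1}"]) (use 1 in \<open>auto simp: Mf_def Dm_def\<close>)
  next
    case 2
    show ?thesis
      by (rule deriv_open_from[OF pos, where S="{1<..}"]) (use 2 in \<open>auto simp: Mf_def Dm_def\<close>)
  next
    case 3
    show ?thesis
      by (rule deriv_open_from[OF neg, where S="{..<-1}"]) (use 3 in \<open>auto simp: Mf_def Dm_def\<close>)
  next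
    case 4
    show ?thesis
    proof (rule deriv_split)
      show "(Mf has_real_derivative Dm t) (at t within {..t})"
        by (rule deriv_within_from[OF sq]) (use 4 in \<open>auto simp: Mf_def Dm_def dist_real_def\<close>)
      show "(Mf has_real_derivative Dm t) (at t within {t..})"
        by (rule deriv_within_from[OF pos]) (use 4 in \<open>auto simp: Mf_def Dm_def dist_real_def\<close>)
    qed
  next
    case 5
    show ?thesis
    proof (rule deriv_split)
      show "(Mf has_real_derivative Dm t) (at t within {..t})"
        by (rule deriv_within_from[OF neg]) (use 5 in \<open>auto simp: Mf_def Dm_def dist_real_def\<close>)
      show "(Mf has_real_derivative Dm t) (at t within {t..})"
        by (rule deriv_within_from[OF sq]) (use 5 in \<open>auto simp: Mf_def Dm_def dist_real_def\<close>)
    qed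
  qed
qed

lemma Dm_deriv: "(Dm has_real_derivative Ph t) (at t)"
proof -
  have sq: "((\<lambda>s. 2 * s) has_real_derivative 2) (at t)"
    by (auto intro!: derivative_eq_intros)
  have pos: "((\<lambda>s. 6 - 8/(1+s)) has_real_derivative 8/(1+t)^2) (at t)" if "t > -1" for t
    using that by (auto intro!: derivative_eq_intros simp: field_simps power2_eq_square)
  have neg: "((\<lambda>s. -6 + 8/(1-s)) has_real_derivative 8/(1-t)^2) (at t)" if "t < 1" for t
    using that by (auto intro!: derivative_eq_intros simp: field_simps power2_eq_square)
  consider "\<bar>t\<bar> < 1" | "t > 1" | "t < -1" | "t = 1" | "t = -1" by linarith
  then show ?thesis
  proof cases
    case 1
    show ?thesis
      by (rule deriv_open_from[OF sq, where S="{-1<..<1}"]) (use 1 in \<open>auto simp: Ph_def Dm_def\<close>)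
  next
    case 2
    show ?thesis
      by (rule deriv_open_from[OF pos, where S="{1<..}"]) (use 2 in \<open>auto simp: Ph_def Dm_def\<close>)
  next
    case 3
    show ?thesis
      by (rule deriv_open_from[OF neg, where S="{..<-1}"]) (use 3 in \<open>auto simp: Ph_def Dm_def\<close>)
  next
    case 4
    show ?thesis
    proof (rule deriv_split)
      show "(Dm has_real_derivative Ph t) (at t within {..t})"
        by (rule deriv_within_from[OF sq]) (use 4 in \<open>auto simp: Ph_def Dm_def dist_real_def\<close>)
      show "(Dm has_real_derivative Ph t) (at t within {t..})"
        by (rule deriv_within_from[OF pos]) (use 4 in \<open>auto simp: Ph_def Dm_def dist_real_def\<close>)
    qed
  next
    case 5
    show ?thesis
    proof (rule deriv_split)
      show "(Dm has_real_derivative Ph t) (at t within {..t})"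
        by (rule deriv_within_from[OF neg]) (use 5 in \<open>auto simp: Ph_def Dm_def dist_real_def\<close>)
      show "(Dm has_real_derivative Ph t) (at t within {t..})"
        by (rule deriv_within_from[OF sq]) (use 5 in \<open>auto simp: Ph_def Dm_def dist_real_def\<close>)
    qed
  qed
qed

lemma Ph_bounds: "0 \<le> Ph t" "Ph t \<le> 2"
proof -
  show "0 \<le> Ph t" by (simp add: Ph_def)
  have "\<bar>t\<bar> > 1 \<Longrightarrow> 8/(1+\<bar>t\<bar>)^2 \<le> 2"
  proof -
    assume "\<bar>t\<bar> > 1"
    then have "(2::real)^2 \<le> (1+\<bar>t\<bar>)^2" by (intro power_mono) auto
    then have "4 \<le> (1+\<bar>t\<bar>)^2" by simp
    then show ?thesis by (simp add: divide_le_eq)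
  qed
  then show "Ph t \<le> 2" by (auto simp: Ph_def)
qed

lemma Dm_mono: "s \<le> t \<Longrightarrow> Dm s \<le> Dm t"
  by (rule DERIV_nonneg_imp_nondecreasing[of s t Dm]) (use Dm_deriv Ph_bounds in blast)+

lemma Dm_lip: "\<bar>Dm s - Dm t\<bar> \<le> 2 * \<bar>s - t\<bar>"
proof -
  have *: "\<bar>Dm s - Dm t\<bar> \<le> 2 * \<bar>s - t\<bar>" if lt: "s < t" for s t
  proof -
    obtain z where "Dm t - Dm s = (t - s) * Ph z"
      using MVT2[OF lt, of Dm Ph] Dm_deriv by blast
    moreover have "0 \<le> Ph z" "Ph z \<le> 2" using Ph_bounds by auto
    moreover have "(t - s) * Ph z \<le> (t - s) * 2" using \<open>Ph z \<le> 2\<close> lt by (intro mult_left_mono) auto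
    moreover have "0 \<le> (t - s) * Ph z" using \<open>0 \<le> Ph z\<close> lt by simp
    ultimately have "\<bar>Dm t - Dm s\<bar> \<le> (t - s) * 2" by linarith
    then show ?thesis using lt by (simp add: abs_minus_commute)
  qed
  consider "s < t" | "s = t" | "t < s" by linarith
  then show ?thesis by cases (use *[of s t] *[of t s] in auto)
qed

lemma Dm_bound: "\<bar>Dm t\<bar> \<le> 6"
proof (cases "\<bar>t\<bar> \<le> 1")
  case True then show ?thesis by (simp add: Dm_def)
next
  case False
  then have "0 < 8/(1+\<bar>t\<bar>)" "8/(1+\<bar>t\<bar>) \<le> 4" by (auto simp: divide_le_eq)
  then have "\<bar>6 - 8/(1+\<bar>t\<bar>)\<bar> \<le> 6" by linarith
  then show ?thesis using False by (simp add: Dm_def abs_mult abs_sgn_eq split: if_split_asm)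
qed

lemma Mf_even: "Mf (-t) = Mf t" by (simp add: Mf_def)
lemma Mf_abs: "Mf \<bar>t\<bar> = Mf t" by (simp add: Mf_def)
lemma Mf_zero[simp]: "Mf 0 = 0" by (simp add: Mf_def)
lemma Dm_zero[simp]: "Dm 0 = 0" by (simp add: Dm_def)

lemma Mf_lower: "2 * \<bar>t\<bar> - 1 \<le> Mf t"
proof (cases "\<bar>t\<bar> \<le> 1")
  case True
  have "0 \<le> (\<bar>t\<bar> - 1)^2" by simp
  moreover have "(\<bar>t\<bar> - 1)^2 = t^2 - 2 * \<bar>t\<bar> + 1"
    by (simp add: power2_eq_square algebra_simps)
  ultimately show ?thesis using True by (simp add: Mf_def)
next
  case False
  have "ln ((1+\<bar>t\<bar>)/2) \<le> (1+\<bar>t\<bar>)/2 - 1" by (rule ln_le_minus_one) (use False in auto)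
  then show ?thesis using False by (simp add: Mf_def)
qed

lemma Mf_nonneg: "0 \<le> Mf t"
proof (cases "\<bar>t\<bar> \<le> 1")
  case True then show ?thesis by (simp add: Mf_def)
next
  case False then show ?thesis using Mf_lower[of t] by linarith
qed

lemma Mf_upper: "Mf t \<le> 6 * \<bar>t\<bar>"
proof (cases "\<bar>t\<bar> \<le> 1")
  case True
  then have "\<bar>t\<bar> * \<bar>t\<bar> \<le> \<bar>t\<bar> * 1" by (intro mult_left_mono) auto
  then have "t^2 \<le> \<bar>t\<bar>" by (simp add: power2_eq_square)
  then show ?thesis using True by (simp add: Mf_def)
next
  case False
  then have "0 \<le> ln ((1+\<bar>t\<bar>)/2)" by simp
  moreover have "Mf t = 6*\<bar>t\<bar> - 5 - 8*ln((1+\<bar>t\<bar>)/2)" using False by (simp add: Mf_def)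
  ultimately show ?thesis by linarith
qed

lemma Mf_mvt: "\<exists>z. Mf b - Mf a = (b - a) * Dm z \<and> min a b \<le> z \<and> z \<le> max a b"
proof -
  consider "a < b" | "a = b" | "b < a" by linarith
  then show ?thesis
  proof cases
    case 1
    then obtain z where "a < z" "z < b" "Mf b - Mf a = (b - a) * Dm z"
      using MVT2[OF 1, of Mf Dm] Mf_deriv by blast
    then show ?thesis by (intro exI[of _ z]) auto
  next
    case 2 then show ?thesis by auto
  next
    case 3
    then obtain z where "b < z" "z < a" "Mf a - Mf b = (a - b) * Dm z"
      using MVT2[OF 3, of Mf Dm] Mf_deriv by blast
    then show ?thesis by (intro exI[of _ z]) (auto simp: algebra_simps)
  qed
qed

lemma Mf_tangent: "Mf a + (b - a) * Dm a \<le> Mf b"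
proof -
  obtain z where z: "Mf b - Mf a = (b - a) * Dm z" "min a b \<le> z" "z \<le> max a b"
    using Mf_mvt by blast
  have "(b - a) * Dm a \<le> (b - a) * Dm z"
  proof (cases "a \<le> b")
    case True
    then have "a \<le> z" using z by auto
    then show ?thesis using True Dm_mono by (intro mult_left_mono) auto
  next
    case False
    then have "z \<le> a" using z by auto
    then show ?thesis using False Dm_mono[of z a] by (intro mult_left_mono_neg) auto
  qed
  then show ?thesis using z by linarith
qed

lemma Mf_convex:
  assumes "0 \<le> th" "th \<le> 1"
  shows "Mf (th * a + (1 - th) * b) \<le> th * Mf a + (1 - th) * Mf b"
proof -
  define c where "c = th * a + (1 - th) * b"
  have 1: "Mf c + (a - c) * Dm c \<le> Mf a" by (rule Mf_tangent)
  have 2: "Mf c + (b - c) * Dm c \<le> Mf b" by (rule Mf_tangent)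
  have "th * (Mf c + (a - c) * Dm c) + (1 - th) * (Mf c + (b - c) * Dm c) \<le> th * Mf a + (1 - th) * Mf b"
    using 1 2 assms by (intro add_mono mult_left_mono) auto
  moreover have "th * (Mf c + (a - c) * Dm c) + (1 - th) * (Mf c + (b - c) * Dm c) = Mf c"
    unfolding c_def by (simp add: algebra_simps)
  ultimately show ?thesis unfolding c_def by simp
qed

lemma Mf_remainder: "Mf (a + b) \<le> Mf a + b * Dm a + 12 * Mf b"
proof -
  obtain z where z: "Mf (a+b) - Mf a = ((a+b) - a) * Dm z" "min a (a+b) \<le> z" "z \<le> max a (a+b)"
    using Mf_mvt by blast
  have zb: "\<bar>z - a\<bar> \<le> \<bar>b\<bar>" using z by auto
  have R: "Mf (a+b) - Mf a - b * Dm a = b * (Dm z - Dm a)" using z by (simp add: algebra_simps)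
  have "b * (Dm z - Dm a) \<le> \<bar>b\<bar> * \<bar>Dm z - Dm a\<bar>" by (simp add: abs_mult[symmetric])
  also have A: "\<dots> \<le> \<bar>b\<bar> * (2 * \<bar>b\<bar>)"
    using Dm_lip[of z a] zb by (intro mult_left_mono) auto
  finally have r1: "b * (Dm z - Dm a) \<le> 2 * b^2" by (simp add: power2_eq_square abs_mult_self_eq)
  have "b * (Dm z - Dm a) \<le> \<bar>b\<bar> * \<bar>Dm z - Dm a\<bar>" by (simp add: abs_mult[symmetric])
  also have "\<dots> \<le> \<bar>b\<bar> * 12"
    using Dm_bound[of z] Dm_bound[of a] by (intro mult_left_mono) auto
  finally have r2: "b * (Dm z - Dm a) \<le> 12 * \<bar>b\<bar>" by simp
  have "b * (Dm z - Dm a) \<le> 12 * Mf b"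
  proof (cases "\<bar>b\<bar> \<le> 1")
    case True
    have "0 \<le> b^2" by simp
    moreover have "Mf b = b^2" using True by (simp add: Mf_def)
    ultimately show ?thesis using r1 by linarith
  next
    case False then show ?thesis using r2 Mf_lower[of b] by linarith
  qed
  then show ?thesis using R by linarith
qed

lemma Mf_mono_nonneg:
  assumes "0 \<le> s" "s \<le> t" shows "Mf s \<le> Mf t"
proof (rule DERIV_nonneg_imp_nondecreasing[of s t Mf])
  show "s \<le> t" by fact
  fix x assume "s \<le> x" "x \<le> t"
  then show "\<exists>y. DERIV Mf x :> y \<and> 0 \<le> y" using assms Mf_deriv Dm_mono[of 0 x] by auto
qed

lemma Mf_mono_abs: "\<bar>s\<bar> \<le> \<bar>t\<bar> \<Longrightarrow> Mf s \<le> Mf t"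
  using Mf_mono_nonneg[of "\<bar>s\<bar>" "\<bar>t\<bar>"] by (simp add: Mf_abs)

lemma Mf_cont: "isCont Mf t" using Mf_deriv by (rule DERIV_isCont)
lemma Dm_cont: "isCont Dm t" using Dm_deriv by (rule DERIV_isCont)

lemma fracA: "(v::real) \<noteq> 0 \<Longrightarrow> 8 / v + 8 * x / v^2 = (8 * v + 8 * x) / v^2"
  by (simp add: field_simps power2_eq_square)
lemma fracB: "(v::real) \<noteq> 0 \<Longrightarrow> 8 * (T + 1) / v^2 - 8 / v = (8 * (T + 1) - 8 * v) / v^2"
  by (simp add: field_simps power2_eq_square)

lemma Mf_sDm: assumes "0 \<le> s" shows "s * Dm s \<le> 2 * Mf s"
proof -
  define u where "u s = 2 * Mf s - s * Dm s" for s
  have "u 0 \<le> u s"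
  proof (rule DERIV_nonneg_imp_nondecreasing[of 0 s u])
    show "0 \<le> s" by fact
    fix x assume x: "0 \<le> x" "x \<le> s"
    have d: "(u has_real_derivative (2 * Dm x - (Dm x + x * Ph x))) (at x)"
      unfolding u_def by (auto intro!: derivative_eq_intros Mf_deriv Dm_deriv)
    have "0 \<le> Dm x - x * Ph x"
    proof (cases "x \<le> 1")
      case True then show ?thesis using x by (simp add: Dm_def Ph_def)
    next
      case False
      then have xp: "x > 1" by simp
      have "0 \<le> (x - 1) * (6 * x + 2)" using xp by simp
      then have "8 * (1 + x) + 8 * x \<le> 6 * (1 + x)^2" by (simp add: power2_eq_square algebra_simps)
      have nz: "1 + x \<noteq> 0" using xp by simp
      have eq: "8 / (1 + x) + 8 * x / (1 + x)^2 = (8 * (1 + x) + 8 * x) / (1 + x)^2"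
        using nz by (rule fracA)
      have "(8 * (1 + x) + 8 * x) / (1 + x)^2 \<le> 6"
        using xp \<open>8 * (1 + x) + 8 * x \<le> 6 * (1 + x)^2\<close> by (simp add: divide_le_eq)
      then have "8 / (1 + x) + 8 * x / (1 + x)^2 \<le> 6" using eq by simp
      moreover have "Dm x - x * Ph x = 6 - 8 / (1 + x) - 8 * x / (1 + x)^2"
        using xp by (simp add: Dm_def Ph_def)
      ultimately show ?thesis by linarith
    qed
    then show "\<exists>y. DERIV u x :> y \<and> 0 \<le> y" using d by (intro exI[of _ "2 * Dm x - (Dm x + x * Ph x)"]) auto
  qed
  then show ?thesis by (simp add: u_def)
qed

lemma Mf_ratio:
  assumes "0 < a" "a \<le> b"
  shows "Mf b / b^2 \<le> Mf a / a^2"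
proof (rule DERIV_nonpos_imp_nonincreasing[of a b "\<lambda>s. Mf s / s^2"])
  show "a \<le> b" by fact
  fix x assume x: "a \<le> x" "x \<le> b"
  then have xp: "x > 0" using assms by simp
  have d: "((\<lambda>s. Mf s / s^2) has_real_derivative (Dm x * x^2 - Mf x * (2 * x)) / (x^2)^2) (at x)"
    using xp by (auto intro!: derivative_eq_intros Mf_deriv simp: power2_eq_square)
  have "Dm x * x^2 - Mf x * (2 * x) = x * (x * Dm x - 2 * Mf x)" by (simp add: power2_eq_square algebra_simps)
  also have "\<dots> \<le> 0" using Mf_sDm[of x] xp by (simp add: mult_nonneg_nonpos)
  finally have "(Dm x * x^2 - Mf x * (2 * x)) / (x^2)^2 \<le> 0" by (intro divide_nonpos_pos) (use xp in auto)
  then show "\<exists>y. ((\<lambda>s. Mf s / s^2) has_real_derivative y) (at x) \<and> y \<le> 0" using d by blast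
qed

lemma Mf_quad:
  assumes "1 \<le> k"
  shows "Mf (k * t) \<le> k^2 * Mf t"
proof (cases "t = 0")
  case True then show ?thesis by simp
next
  case False
  then have a: "0 < \<bar>t\<bar>" by simp
  have "\<bar>t\<bar> \<le> k * \<bar>t\<bar>" using assms a by simp
  from Mf_ratio[OF a this]
  have "Mf (k * \<bar>t\<bar>) / (k * \<bar>t\<bar>)^2 \<le> Mf \<bar>t\<bar> / \<bar>t\<bar>^2" .
  moreover have "Mf (k * \<bar>t\<bar>) = Mf (k * t)" using assms
    by (metis Mf_abs abs_mult abs_of_nonneg order_trans zero_le_one)
  ultimately have "Mf (k * t) / (k^2 * t^2) \<le> Mf t / t^2" by (simp add: Mf_abs power_mult_distrib)
  moreover have "0 < k^2 * t^2" using a assms by simp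
  ultimately show ?thesis using a by (simp add: divide_le_eq field_simps)
qed

lemma vd_helper:
  fixes F :: "real \<Rightarrow> real"
  assumes "(F has_real_derivative D) (at u)" "D = g"
  shows "(F has_vector_derivative g) (at u within S)"
  using assms has_real_derivative_iff_has_vector_derivative has_field_derivative_at_within by blast

lemma orliczM_eq: "orliczM t = Mf t"
proof -
  define T where "T = \<bar>t\<bar>"
  define g where "g u = phi u * (T - u)" for u
  have oM: "orliczM t = integral {0..T} g" unfolding orliczM_def T_def g_def by simp
  define F1 where "F1 u = 2 * T * u - u^2" for u
  have F1d: "(F1 has_vector_derivative g u) (at u within S)" if "u \<le> 1" for u S
    unfolding F1_def by (rule vd_helper[where D = "2 * T - 2 * u"]) (use that in \<open>auto intro!: derivative_eq_intros simp: F1_def g_def phi_def algebra_simps\<close>)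
  show ?thesis
  proof (cases "T \<le> 1")
    case True
    have "(g has_integral (F1 T - F1 0)) {0..T}"
      by (rule fundamental_theorem_of_calculus) (use True F1d in \<open>auto simp: T_def\<close>)
    then have "integral {0..T} g = T^2" by (simp add: integral_unique F1_def power2_eq_square)
    then show ?thesis using True by (simp add: oM Mf_def T_def)
  next
    case False
    define F2 where "F2 u = - 8 * (T + 1) / (1 + u) - 8 * ln (1 + u)" for u
    have F2d: "(F2 has_vector_derivative g u) (at u within S)" if "1 \<le> u" for u S
    proof (rule vd_helper[where D = "8 * (T + 1) / (1 + u)^2 - 8 / (1 + u)"])
      show "(F2 has_real_derivative 8 * (T + 1) / (1 + u)^2 - 8 / (1 + u)) (at u)"
        unfolding F2_def using that by (auto intro!: derivative_eq_intros simp: field_simps power2_eq_square)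
      have ph: "phi u = 8 / (1 + u)^2"
      proof (cases "u = 1")
        case True then show ?thesis by (simp add: phi_def)
      next
        case False then show ?thesis using that by (simp add: phi_def)
      qed
      have nz: "1 + u \<noteq> 0" using that by simp
      show "8 * (T + 1) / (1 + u)^2 - 8 / (1 + u) = g u"
        unfolding g_def ph using fracB[OF nz, of T] by (simp add: algebra_simps)
    qed
    have i1: "(g has_integral (F1 1 - F1 0)) {0..1}"
      by (rule fundamental_theorem_of_calculus) (use F1d in auto)
    have i2: "(g has_integral (F2 T - F2 1)) {1..T}"
      by (rule fundamental_theorem_of_calculus) (use False F2d in auto)
    have "(g has_integral ((F1 1 - F1 0) + (F2 T - F2 1))) {0..T}"
      by (rule has_integral_combine[OF _ _ i1 i2]) (use False in auto)
    then have "integral {0..T} g = (F1 1 - F1 0) + (F2 T - F2 1)" by (rule integral_unique)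
    also have "\<dots> = 6 * T - 5 - 8 * ln ((1 + T) / 2)"
      using False by (simp add: F1_def F2_def ln_div field_simps)
    finally show ?thesis using False by (simp add: oM Mf_def T_def)
  qed
qed

lemma Mf_contOn: "continuous_on UNIV Mf"
  using Mf_cont by (simp add: continuous_at_imp_continuous_on)
lemma Dm_contOn: "continuous_on UNIV Dm"
  using Dm_cont by (simp add: continuous_at_imp_continuous_on)

lemma meas_Mf[measurable]: "g \<in> borel_measurable M \<Longrightarrow> (\<lambda>w. Mf (g w)) \<in> borel_measurable M"
  by (rule borel_measurable_continuous_on[OF Mf_contOn])
lemma meas_Dm[measurable]: "g \<in> borel_measurable M \<Longrightarrow> (\<lambda>w. Dm (g w)) \<in> borel_measurable M"
  by (rule borel_measurable_continuous_on[OF Dm_contOn])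

lemma int_Mf: "integrable M g \<Longrightarrow> integrable M (\<lambda>w. Mf (g w))"
proof -
  assume g: "integrable M g"
  show ?thesis
  proof (rule Bochner_Integration.integrable_bound[where f = "\<lambda>w. 6 * \<bar>g w\<bar>"])
    show "integrable M (\<lambda>w. 6 * \<bar>g w\<bar>)" using g by simp
    show "(\<lambda>w. Mf (g w)) \<in> borel_measurable M" using g by measurable
    show "AE w in M. norm (Mf (g w)) \<le> norm (6 * \<bar>g w\<bar>)"
      using Mf_upper Mf_nonneg by auto
  qed
qed

lemma int_gDm: "integrable M g \<Longrightarrow> h \<in> borel_measurable M \<Longrightarrow> integrable M (\<lambda>w. g w * Dm (h w))"
proof -
  assume g: "integrable M g" and h: "h \<in> borel_measurable M"
  show ?thesis
  proof (rule Bochner_Integration.integrable_bound[where f = "\<lambda>w. 6 * \<bar>g w\<bar>"])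
    show "integrable M (\<lambda>w. 6 * \<bar>g w\<bar>)" using g by simp
    show "(\<lambda>w. g w * Dm (h w)) \<in> borel_measurable M" using g h by measurable
    show "AE w in M. norm (g w * Dm (h w)) \<le> norm (6 * \<bar>g w\<bar>)"
    proof (rule AE_I2)
      fix w
      have "\<bar>g w\<bar> * \<bar>Dm (h w)\<bar> \<le> \<bar>g w\<bar> * 6" using Dm_bound by (intro mult_left_mono) auto
      then show "norm (g w * Dm (h w)) \<le> norm (6 * \<bar>g w\<bar>)" by (simp add: abs_mult)
    qed
  qed
qed

definition LS :: "'a measure \<Rightarrow> ('a \<Rightarrow> real) \<Rightarrow> real set" where
  "LS M f = {lam. lam > 0 \<and> (\<integral> w. Mf (f w / lam) \<partial>M) \<le> 1}"

lemma lux_eq: assumes "integrable M f" shows "lux_norm M f = Inf (LS M f)"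
proof -
  have "{lam. lam > 0 \<and> (\<integral>\<^sup>+ w. ennreal (orliczM (f w / lam)) \<partial>M) \<le> 1} = {lam. lam > 0 \<and> (\<integral> w. Mf (f w / lam) \<partial>M) \<le> 1}"
  proof (intro Collect_cong conj_cong refl)
    fix lam :: real assume "lam > 0"
    have i: "integrable M (\<lambda>w. Mf (f w / lam))" using assms by (intro int_Mf) simp
    have "(\<integral>\<^sup>+ w. ennreal (orliczM (f w / lam)) \<partial>M) = ennreal (\<integral> w. Mf (f w / lam) \<partial>M)"
      unfolding orliczM_eq by (rule nn_integral_eq_integral[OF i]) (simp add: Mf_nonneg)
    then show "((\<integral>\<^sup>+ w. ennreal (orliczM (f w / lam)) \<partial>M) \<le> 1) = ((\<integral> w. Mf (f w / lam) \<partial>M) \<le> 1)"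
      by (simp add: ennreal_le_1)
  qed
  then show ?thesis unfolding lux_norm_def LS_def by simp
qed

lemma LS_bdd: "bdd_below (LS M f)"
  unfolding LS_def by (rule bdd_belowI[of _ 0]) auto

lemma lux_le: assumes "integrable M f" "lam > 0" "(\<integral> w. Mf (f w / lam) \<partial>M) \<le> 1"
  shows "lux_norm M f \<le> lam"
  unfolding lux_eq[OF assms(1)] by (rule cInf_lower[OF _ LS_bdd]) (use assms in \<open>simp add: LS_def\<close>)

lemma LS_nonempty: assumes "prob_space M" "integrable M f" shows "LS M f \<noteq> {}"
proof -
  interpret prob_space M by fact
  define a where "a = (\<integral> w. \<bar>f w\<bar> \<partial>M)"
  have a0: "0 \<le> a" unfolding a_def by simp
  define lam where "lam = 6 * a + 1"
  have lp: "lam > 0" using a0 by (simp add: lam_def)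
  have "(\<integral> w. Mf (f w / lam) \<partial>M) \<le> (\<integral> w. 6 * \<bar>f w\<bar> / lam \<partial>M)"
  proof (rule integral_mono)
    show "integrable M (\<lambda>w. Mf (f w / lam))" using assms by (intro int_Mf) simp
    show "integrable M (\<lambda>w. 6 * \<bar>f w\<bar> / lam)" using assms by simp
    fix w show "Mf (f w / lam) \<le> 6 * \<bar>f w\<bar> / lam" using Mf_upper[of "f w / lam"] lp by simp
  qed
  also have "\<dots> = 6 * a / lam" unfolding a_def by simp
  also have "\<dots> \<le> 1" using lp a0 by (simp add: lam_def)
  finally have "lam \<in> LS M f" using lp by (simp add: LS_def)
  then show ?thesis by auto
qed

lemma lux_one_le: assumes "prob_space M" "integrable M f" "lux_norm M f = 1"
  shows "(\<integral> w. Mf (f w) \<partial>M) \<le> 1"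
proof (rule ccontr)
  define I where "I = (\<integral> w. Mf (f w) \<partial>M)"
  assume "\<not> ?thesis"
  then have I1: "I > 1" by (simp add: I_def)
  define d where "d = min 1 ((I - 1) / 3)"
  have d0: "0 < d" using I1 by (simp add: d_def)
  have "Inf (LS M f) < 1 + d" using assms(3) d0 lux_eq[OF assms(2)] by simp
  then obtain lam where lam: "lam \<in> LS M f" "lam < 1 + d"
    using cInf_lessD[OF LS_nonempty[OF assms(1,2)]] by blast
  then have lp: "lam > 0" and li: "(\<integral> w. Mf (f w / lam) \<partial>M) \<le> 1" by (auto simp: LS_def)
  have fi: "integrable M (\<lambda>w. Mf (f w))" using assms by (intro int_Mf)
  have gi: "integrable M (\<lambda>w. Mf (f w / lam))" using assms by (intro int_Mf) simp
  have "I \<le> max 1 (lam^2)"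
  proof (cases "lam \<le> 1")
    case True
    have "I \<le> (\<integral> w. Mf (f w / lam) \<partial>M)" unfolding I_def
    proof (rule integral_mono[OF fi gi])
      fix w
      have "\<bar>f w\<bar> \<le> \<bar>f w / lam\<bar>" using True lp
        by (simp add: abs_divide le_divide_eq mult_left_le)
      then show "Mf (f w) \<le> Mf (f w / lam)" by (rule Mf_mono_abs)
    qed
    then show ?thesis using li by simp
  next
    case False
    have "I \<le> (\<integral> w. lam^2 * Mf (f w / lam) \<partial>M)" unfolding I_def
    proof (rule integral_mono[OF fi])
      show "integrable M (\<lambda>w. lam^2 * Mf (f w / lam))" using gi by simp
      fix w
      have "Mf (lam * (f w / lam)) \<le> lam^2 * Mf (f w / lam)" using False by (intro Mf_quad) simp
      then show "Mf (f w) \<le> lam^2 * Mf (f w / lam)" using lp by simp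
    qed
    also have "\<dots> = lam^2 * (\<integral> w. Mf (f w / lam) \<partial>M)" by simp
    also have "\<dots> \<le> lam^2 * 1" using li by (intro mult_left_mono) auto
    finally show ?thesis by simp
  qed
  moreover have "lam^2 < I"
  proof -
    have "lam^2 < (1 + d)^2" using lp lam by (intro power_strict_mono) auto
    also have "\<dots> = 1 + 2 * d + d * d" by (simp add: power2_eq_square algebra_simps)
    also have "\<dots> \<le> 1 + 3 * d"
    proof -
      have "d \<le> 1" by (simp add: d_def)
      then have "d * d \<le> d * 1" using d0 by (intro mult_left_mono) auto
      then show ?thesis by simp
    qed
    also have "\<dots> \<le> I"
    proof -
      have "d \<le> (I - 1) / 3" unfolding d_def by (rule min.cobounded2)
      then have "3 * d \<le> I - 1" by (simp add: field_simps)
      then show ?thesis by simp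
    qed
    finally show ?thesis .
  qed
  ultimately show False using I1 by simp
qed

lemma lux_one_ge: assumes "prob_space M" "integrable M f" "lux_norm M f = 1"
  shows "1 \<le> (\<integral> w. Mf (f w) \<partial>M)"
proof (rule ccontr)
  define I where "I = (\<integral> w. Mf (f w) \<partial>M)"
  assume "\<not> ?thesis"
  then have I1: "I < 1" by (simp add: I_def)
  have I0: "0 \<le> I" unfolding I_def by (simp add: Mf_nonneg)
  define lam where "lam = (1 + I) / 2"
  have lp: "0 < lam" "lam < 1" using I0 I1 by (auto simp: lam_def)
  have fi: "integrable M (\<lambda>w. Mf (f w))" using assms by (intro int_Mf)
  have gi: "integrable M (\<lambda>w. Mf (f w / lam))" using assms by (intro int_Mf) simp
  have "(\<integral> w. Mf (f w / lam) \<partial>M) \<le> (\<integral> w. (1/lam)^2 * Mf (f w) \<partial>M)"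
  proof (rule integral_mono[OF gi])
    show "integrable M (\<lambda>w. (1/lam)^2 * Mf (f w))" using fi by simp
    fix w
    have "Mf ((1/lam) * f w) \<le> (1/lam)^2 * Mf (f w)" using lp by (intro Mf_quad) simp
    then show "Mf (f w / lam) \<le> (1/lam)^2 * Mf (f w)" by simp
  qed
  also have "\<dots> = I / lam^2" unfolding I_def by (simp add: power_divide)
  also have "\<dots> \<le> 1"
  proof -
    have "0 \<le> (1 - I)^2" by simp
    then have "I \<le> lam^2" unfolding lam_def by (simp add: power2_eq_square field_simps)
    then show ?thesis using lp by simp
  qed
  finally have "lux_norm M f \<le> lam" by (rule lux_le[OF assms(2) lp(1)])
  then show False using lp assms(3) by simp
qed

lemma fine:
  assumes P: "prob_space M" and ix: "integrable M x" and iy: "integrable M y"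
    and Ix: "(\<integral> w. Mf (x w) \<partial>M) = 1" and Iy: "(\<integral> w. Mf (y w) \<partial>M) \<le> 1"
    and Sx: "(\<integral> w. Mf (tau * x w) \<partial>M) \<le> s" and Sy: "(\<integral> w. Mf (tau * y w) \<partial>M) \<le> s"
    and tp: "0 < tau" and s0: "0 \<le> s" and st: "128 * s < tau" and t1: "tau < 1/128"
  shows "lux_norm M (\<lambda>w. x w + tau * y w)
           \<le> 1 + tau * (\<integral> w. y w * Dm (x w) \<partial>M) / (\<integral> w. x w * Dm (x w) \<partial>M) + 128 * s"
proof -
  interpret prob_space M by fact
  have xm[measurable]: "x \<in> borel_measurable M" using ix by measurable
  define PP where "PP = (\<integral> w. x w * Dm (x w) \<partial>M)"
  define L where "L = (\<integral> w. y w * Dm (x w) \<partial>M)"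
  have iMx: "integrable M (\<lambda>w. Mf (x w))" using ix by (rule int_Mf)
  have iMy: "integrable M (\<lambda>w. Mf (y w))" using iy by (rule int_Mf)
  have iPx: "integrable M (\<lambda>w. x w * Dm (x w))" using ix by (intro int_gDm) auto
  have iLy: "integrable M (\<lambda>w. y w * Dm (x w))" using iy by (intro int_gDm) auto
  have iTx: "integrable M (\<lambda>w. Mf (tau * x w))" using ix by (intro int_Mf) simp
  have iTy: "integrable M (\<lambda>w. Mf (tau * y w))" using iy by (intro int_Mf) simp
  have P1: "1 \<le> PP"
  proof -
    have "(\<integral> w. Mf (x w) \<partial>M) \<le> PP" unfolding PP_def
    proof (rule integral_mono[OF iMx iPx])
      fix w show "Mf (x w) \<le> x w * Dm (x w)" using Mf_tangent[of "x w" 0] by simp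
    qed
    then show ?thesis using Ix by simp
  qed
  have young: "\<bar>L\<bar> \<le> PP"
  proof -
    have ir: "integrable M (\<lambda>w. Mf (y w) - Mf (x w) + x w * Dm (x w))" using iMx iMy iPx by simp
    have r: "(\<integral> w. Mf (y w) - Mf (x w) + x w * Dm (x w) \<partial>M) \<le> PP"
      using Iy Ix iMx iMy iPx by (simp add: PP_def)
    have "L \<le> (\<integral> w. Mf (y w) - Mf (x w) + x w * Dm (x w) \<partial>M)" unfolding L_def
    proof (rule integral_mono[OF iLy ir])
      fix w show "y w * Dm (x w) \<le> Mf (y w) - Mf (x w) + x w * Dm (x w)"
        using Mf_tangent[of "x w" "y w"] by (simp add: algebra_simps)
    qed
    moreover have "- L \<le> (\<integral> w. Mf (y w) - Mf (x w) + x w * Dm (x w) \<partial>M)"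
    proof -
      have "(\<integral> w. - (y w * Dm (x w)) \<partial>M) \<le> (\<integral> w. Mf (y w) - Mf (x w) + x w * Dm (x w) \<partial>M)"
      proof (rule integral_mono[OF _ ir])
        show "integrable M (\<lambda>w. - (y w * Dm (x w)))" using iLy by simp
        fix w show "- (y w * Dm (x w)) \<le> Mf (y w) - Mf (x w) + x w * Dm (x w)"
          using Mf_tangent[of "x w" "- y w"] Mf_even[of "y w"] by (simp add: algebra_simps)
      qed
      then show ?thesis by (simp add: L_def)
    qed
    ultimately show ?thesis using r by linarith
  qed
  define sig where "sig = tau * L / PP + 128 * s"
  have "\<bar>L / PP\<bar> \<le> 1" using young P1 by (simp add: abs_divide divide_le_eq)
  then have "tau * \<bar>L / PP\<bar> \<le> tau * 1" using tp by (intro mult_left_mono) auto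
  moreover have "\<bar>tau * L / PP\<bar> = tau * \<bar>L / PP\<bar>" using tp
    by (simp only: times_divide_eq_right[symmetric] abs_mult abs_of_pos)
  ultimately have "\<bar>tau * L / PP\<bar> \<le> tau" by linarith
  moreover have "\<bar>sig\<bar> \<le> \<bar>tau * L / PP\<bar> + \<bar>128 * s\<bar>"
    unfolding sig_def by (rule abs_triangle_ineq)
  moreover have "\<bar>128 * s\<bar> = 128 * s" using s0 by simp
  ultimately have sig2: "\<bar>sig\<bar> \<le> 2 * tau" using st by linarith
  define lam where "lam = 1 + sig"
  have lam_lo: "108 / 128 \<le> lam" using sig2 t1 by (simp add: lam_def)
  have lam_hi: "lam \<le> 3" using sig2 t1 by (simp add: lam_def)
  have lp: "0 < lam" using lam_lo by simp
  have k1: "1 \<le> 3 / lam" using lam_hi lp by (simp add: le_divide_eq)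
  have pw: "Mf ((x w + tau * y w) / lam) \<le> Mf (x w) + (tau / lam) * (y w * Dm (x w))
      - (sig / lam) * (x w * Dm (x w)) + (3 / lam^2 * 12) * Mf (tau * y w) + (6 / lam^2 * 12) * Mf (tau * x w)" for w
  proof -
    define a where "a = x w"
    define b where "b = y w"
    define c where "c = (tau * b - sig * a) / lam"
    have e: "(a + tau * b) / lam = a + c" unfolding c_def lam_def using lp
      by (simp add: field_simps lam_def)
    have R: "Mf (a + c) \<le> Mf a + c * Dm a + 12 * Mf c" by (rule Mf_remainder)
    have c_eq: "c = (1/3) * (3 / lam * (tau * b)) + (1 - 1/3) * (- (3 * sig * a / (2 * lam)))"
      unfolding c_def using lp by (simp add: field_simps)
    have cv: "Mf c \<le> (1/3) * Mf (3 / lam * (tau * b)) + (1 - 1/3) * Mf (- (3 * sig * a / (2 * lam)))"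
      unfolding c_eq by (rule Mf_convex) auto
    have q1: "Mf (3 / lam * (tau * b)) \<le> (3 / lam)^2 * Mf (tau * b)" using k1 by (rule Mf_quad)
    have "\<bar>- (3 * sig * a / (2 * lam))\<bar> \<le> \<bar>3 / lam * (tau * a)\<bar>"
    proof -
      have "\<bar>- (3 * sig * a / (2 * lam))\<bar> = 3 * \<bar>sig\<bar> * \<bar>a\<bar> / (2 * lam)" using lp by (simp add: abs_mult abs_divide)
      also have "\<dots> \<le> 3 * (2 * tau) * \<bar>a\<bar> / (2 * lam)" using sig2 lp
        by (intro divide_right_mono mult_right_mono) auto
      also have "\<dots> = \<bar>3 / lam * (tau * a)\<bar>" using lp tp by (simp add: abs_mult abs_divide)
      finally show ?thesis .
    qed
    then have q2: "Mf (- (3 * sig * a / (2 * lam))) \<le> (3 / lam)^2 * Mf (tau * a)"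
      using Mf_mono_abs Mf_quad[OF k1, of "tau * a"] by (meson order_trans)
    have "Mf c \<le> 3 / lam^2 * Mf (tau * b) + 6 / lam^2 * Mf (tau * a)"
    proof -
      have "Mf c \<le> (1/3) * ((3 / lam)^2 * Mf (tau * b)) + (1 - 1/3) * ((3 / lam)^2 * Mf (tau * a))"
      proof -
        have "(1/3) * Mf (3 / lam * (tau * b)) \<le> (1/3) * ((3 / lam)^2 * Mf (tau * b))"
          using q1 by (rule mult_left_mono) simp
        moreover have "(1 - 1/3) * Mf (- (3 * sig * a / (2 * lam))) \<le> (1 - 1/3) * ((3 / lam)^2 * Mf (tau * a))"
          using q2 by (rule mult_left_mono) simp
        ultimately show ?thesis using cv by linarith
      qed
      also have "\<dots> = 3 / lam^2 * Mf (tau * b) + 6 / lam^2 * Mf (tau * a)"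
        by (simp add: power2_eq_square field_simps)
      finally show ?thesis .
    qed
    then have "12 * Mf c \<le> 12 * (3 / lam^2 * Mf (tau * b) + 6 / lam^2 * Mf (tau * a))" by simp
    also have "\<dots> = (3 / lam^2 * 12) * Mf (tau * b) + (6 / lam^2 * 12) * Mf (tau * a)"
      by (simp add: algebra_simps)
    finally have Mc: "12 * Mf c \<le> (3 / lam^2 * 12) * Mf (tau * b) + (6 / lam^2 * 12) * Mf (tau * a)" .
    have cD: "c * Dm a = (tau / lam) * (b * Dm a) - (sig / lam) * (a * Dm a)"
      unfolding c_def using lp by (simp add: field_simps)
    have "Mf ((a + tau * b) / lam) \<le> Mf a + (tau / lam) * (b * Dm a) - (sig / lam) * (a * Dm a)
       + (3 / lam^2 * 12) * Mf (tau * b) + (6 / lam^2 * 12) * Mf (tau * a)"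
      using R Mc cD unfolding e by linarith
    then show ?thesis unfolding a_def b_def .
  qed
  define r where "r w = Mf (x w) + (tau / lam) * (y w * Dm (x w))
      - (sig / lam) * (x w * Dm (x w)) + (3 / lam^2 * 12) * Mf (tau * y w) + (6 / lam^2 * 12) * Mf (tau * x w)" for w
  have ir: "integrable M r" unfolding r_def using iMx iLy iPx iTx iTy by simp
  have intr: "(\<integral> w. r w \<partial>M) = 1 + (tau / lam) * L - (sig / lam) * PP
      + (3 / lam^2 * 12) * (\<integral> w. Mf (tau * y w) \<partial>M) + (6 / lam^2 * 12) * (\<integral> w. Mf (tau * x w) \<partial>M)"
    unfolding r_def L_def PP_def using iMx iLy iPx iTx iTy Ix by simp
  have ifl: "integrable M (\<lambda>w. Mf ((x w + tau * y w) / lam))" using ix iy by (intro int_Mf) simp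
  have "(\<integral> w. Mf ((x w + tau * y w) / lam) \<partial>M) \<le> (\<integral> w. r w \<partial>M)"
    by (rule integral_mono[OF ifl ir]) (use pw in \<open>simp add: r_def\<close>)
  also have "\<dots> \<le> 1 + (tau / lam) * L - (sig / lam) * PP + (3 / lam^2 * 12) * s + (6 / lam^2 * 12) * s"
  proof -
    have "(3 / lam^2 * 12) * (\<integral> w. Mf (tau * y w) \<partial>M) \<le> (3 / lam^2 * 12) * s"
      using Sy by (intro mult_left_mono) auto
    moreover have "(6 / lam^2 * 12) * (\<integral> w. Mf (tau * x w) \<partial>M) \<le> (6 / lam^2 * 12) * s"
      using Sx by (intro mult_left_mono) auto
    ultimately show ?thesis unfolding intr by linarith
  qed
  also have "\<dots> = 1 - 128 * s * PP / lam + 108 * s / lam^2"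
    unfolding sig_def using lp P1 by (simp add: field_simps power2_eq_square)
  also have "\<dots> \<le> 1"
  proof -
    have "108 * s / lam^2 \<le> 128 * s / lam"
    proof -
      have "128 * s * (108/128) \<le> 128 * s * lam" using lam_lo s0 by (intro mult_left_mono) auto
      then have "108 * s \<le> 128 * s * lam" by simp
      then show ?thesis using lp by (simp add: field_simps power2_eq_square)
    qed
    moreover have "128 * s / lam \<le> 128 * s * PP / lam"
    proof -
      have "128 * s * 1 \<le> 128 * s * PP" using P1 s0 by (intro mult_left_mono) auto
      then show ?thesis using lp by (intro divide_right_mono) auto
    qed
    ultimately show ?thesis by linarith
  qed
  finally have "lux_norm M (\<lambda>w. x w + tau * y w) \<le> lam" by (intro lux_le) (use ix iy lp in auto)
  then show ?thesis by (simp add: lam_def sig_def L_def PP_def)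
qed

lemma crude:
  assumes P: "prob_space M" and ix: "integrable M x" and iy: "integrable M y"
    and Ix: "(\<integral> w. Mf (x w) \<partial>M) \<le> 1" and Iy: "(\<integral> w. Mf (y w) \<partial>M) \<le> 1" and tp: "0 < tau"
  shows "lux_norm M (\<lambda>w. x w + tau * y w) \<le> 1 + tau"
proof (rule lux_le)
  interpret prob_space M by fact
  show "integrable M (\<lambda>w. x w + tau * y w)" using ix iy by simp
  show "0 < 1 + tau" using tp by simp
  define th where "th = 1 / (1 + tau)"
  have th: "0 \<le> th" "th \<le> 1" using tp by (auto simp: th_def)
  have iMx: "integrable M (\<lambda>w. Mf (x w))" using ix by (rule int_Mf)
  have iMy: "integrable M (\<lambda>w. Mf (y w))" using iy by (rule int_Mf)
  have "(\<integral> w. Mf ((x w + tau * y w) / (1 + tau)) \<partial>M) \<le> (\<integral> w. th * Mf (x w) + (1 - th) * Mf (y w) \<partial>M)"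
  proof (rule integral_mono)
    show "integrable M (\<lambda>w. Mf ((x w + tau * y w) / (1 + tau)))" using ix iy by (intro int_Mf) simp
    show "integrable M (\<lambda>w. th * Mf (x w) + (1 - th) * Mf (y w))" using iMx iMy by simp
    fix w
    have nz: "1 + tau \<noteq> 0" using tp by simp
    have "1 - th = tau / (1 + tau)" unfolding th_def using nz by (simp add: field_simps)
    then have "th * x w + (1 - th) * y w = (x w + tau * y w) / (1 + tau)"
      unfolding th_def by (simp add: add_divide_distrib)
    then have "(x w + tau * y w) / (1 + tau) = th * x w + (1 - th) * y w" by simp
    then show "Mf ((x w + tau * y w) / (1 + tau)) \<le> th * Mf (x w) + (1 - th) * Mf (y w)"
      using Mf_convex[OF th] by simp
  qed
  also have "\<dots> = th * (\<integral> w. Mf (x w) \<partial>M) + (1 - th) * (\<integral> w. Mf (y w) \<partial>M)"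
    using iMx iMy by simp
  also have "\<dots> \<le> th * 1 + (1 - th) * 1"
    using Ix Iy th by (intro add_mono mult_left_mono) auto
  finally show "(\<integral> w. Mf ((x w + tau * y w) / (1 + tau)) \<partial>M) \<le> 1" by simp
qed

lemma l1_le1:
  assumes P: "prob_space M" and ix: "integrable M x" and Ix: "(\<integral> w. Mf (x w) \<partial>M) \<le> 1"
  shows "(\<integral> w. \<bar>x w\<bar> \<partial>M) \<le> 1"
proof -
  interpret prob_space M by fact
  have "(\<integral> w. 2 * \<bar>x w\<bar> - 1 \<partial>M) \<le> (\<integral> w. Mf (x w) \<partial>M)"
    by (rule integral_mono) (use ix Mf_lower in \<open>auto intro: int_Mf\<close>)
  moreover have "(\<integral> w. 2 * \<bar>x w\<bar> - 1 \<partial>M) = 2 * (\<integral> w. \<bar>x w\<bar> \<partial>M) - 1"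
    using ix by (simp add: prob_space)
  ultimately show ?thesis using Ix by linarith
qed

lemma rho_bound:
  assumes P: "prob_space M" and ix: "integrable M x" and iy: "integrable M y"
    and Ix: "(\<integral> w. Mf (x w) \<partial>M) = 1" and Iy: "(\<integral> w. Mf (y w) \<partial>M) = 1"
    and Sx: "(\<integral> w. Mf (tau * x w) \<partial>M) \<le> s" and Sy: "(\<integral> w. Mf (tau * y w) \<partial>M) \<le> s"
    and tp: "0 < tau"
  shows "(lux_norm M (\<lambda>w. x w + tau * y w) + lux_norm M (\<lambda>w. x w - tau * y w)) / 2 - 1 \<le> 128 * s"
proof -
  interpret prob_space M by fact
  have iy': "integrable M (\<lambda>w. - y w)" using iy by simp
  have Iy': "(\<integral> w. Mf (- y w) \<partial>M) = 1" using Iy by (simp add: Mf_even)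
  have Sy': "(\<integral> w. Mf (tau * - y w) \<partial>M) \<le> s" using Sy by (simp add: Mf_even)
  have mi: "(\<lambda>w. x w - tau * y w) = (\<lambda>w. x w + tau * - y w)" by simp
  have iTy: "integrable M (\<lambda>w. Mf (tau * y w))" using iy by (intro int_Mf) simp
  have "0 \<le> (\<integral> w. Mf (tau * y w) \<partial>M)" by (simp add: Mf_nonneg)
  then have s0: "0 \<le> s" using Sy by linarith
  show ?thesis
  proof (cases "tau \<le> 128 * s")
    case True
    have "lux_norm M (\<lambda>w. x w + tau * y w) \<le> 1 + tau"
      by (rule crude[OF P ix iy]) (use Ix Iy tp in auto)
    moreover have "lux_norm M (\<lambda>w. x w - tau * y w) \<le> 1 + tau"
      unfolding mi by (rule crude[OF P ix iy']) (use Ix Iy' tp in auto)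
    moreover have h: "(A + B) / 2 - 1 \<le> 128 * s" if "A \<le> 1 + tau" "B \<le> 1 + tau" for A B :: real
      using that True by (simp add: field_simps)
    ultimately show ?thesis by blast
  next
    case False
    have t1: "tau < 1/128"
    proof (cases "1 \<le> tau")
      case True
      have "(\<integral> w. tau * Mf (y w) \<partial>M) \<le> (\<integral> w. Mf (tau * y w) \<partial>M)"
      proof (rule integral_mono)
        show "integrable M (\<lambda>w. tau * Mf (y w))" using iy by (intro integrable_mult_right int_Mf)
        show "integrable M (\<lambda>w. Mf (tau * y w))" by (rule iTy)
        fix w
        have "Mf ((1/tau) * (tau * y w) + (1 - 1/tau) * 0) \<le> (1/tau) * Mf (tau * y w) + (1 - 1/tau) * Mf 0"
          using True by (intro Mf_convex) auto
        then have "Mf (y w) \<le> (1/tau) * Mf (tau * y w)" using tp by simp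
        then show "tau * Mf (y w) \<le> Mf (tau * y w)" using tp by (simp add: field_simps)
      qed
      then have "tau \<le> s" using Iy Sy by simp
      then show ?thesis using False s0 by linarith
    next
      case False2: False
      have "(\<integral> w. tau^2 * Mf (y w) \<partial>M) \<le> (\<integral> w. Mf (tau * y w) \<partial>M)"
      proof (rule integral_mono)
        show "integrable M (\<lambda>w. tau^2 * Mf (y w))" using iy by (intro integrable_mult_right int_Mf)
        show "integrable M (\<lambda>w. Mf (tau * y w))" by (rule iTy)
        fix w
        have "Mf ((1/tau) * (tau * y w)) \<le> (1/tau)^2 * Mf (tau * y w)"
          using False2 tp by (intro Mf_quad) simp
        then have "Mf (y w) \<le> (1/tau)^2 * Mf (tau * y w)" using tp by simp
        then show "tau^2 * Mf (y w) \<le> Mf (tau * y w)" using tp by (simp add: field_simps power2_eq_square)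
      qed
      then have "tau^2 \<le> s" using Iy Sy by simp
      then have "tau * tau < tau * (1/128)" using False by (simp add: power2_eq_square)
      then show ?thesis using tp by simp
    qed
    have st: "128 * s < tau" using False by simp
    define L where "L = (\<integral> w. y w * Dm (x w) \<partial>M)"
    define PP where "PP = (\<integral> w. x w * Dm (x w) \<partial>M)"
    have a: "lux_norm M (\<lambda>w. x w + tau * y w) \<le> 1 + tau * L / PP + 128 * s"
      unfolding L_def PP_def by (rule fine[OF P ix iy Ix _ Sx Sy tp s0 st t1]) (use Iy in simp)
    have b0: "lux_norm M (\<lambda>w. x w + tau * - y w) \<le> 1 + tau * (\<integral> w. - y w * Dm (x w) \<partial>M) / PP + 128 * s"
      unfolding PP_def by (rule fine[OF P ix iy' Ix _ Sx Sy' tp s0 st t1]) (use Iy' in simp)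
    have "(\<integral> w. - y w * Dm (x w) \<partial>M) = - L" unfolding L_def by simp
    then have b: "lux_norm M (\<lambda>w. x w - tau * y w) \<le> 1 - tau * L / PP + 128 * s"
      using b0 unfolding mi by simp
    have h: "(A + B) / 2 - 1 \<le> 128 * s" if "A \<le> 1 + tau * L / PP + 128 * s" "B \<le> 1 - tau * L / PP + 128 * s" for A B :: real
      using that by (simp add: field_simps)
    show ?thesis using h[OF a b] .
  qed
qed

theorem mainTheorem11:
  fixes mu :: "'a measure" and X :: "('a \<Rightarrow> real) set" and tau :: real
  assumes "prob_space mu"
    and "closed_L1_subspace mu X"
    and "tau > 0"
  shows "mod_smooth mu X tau
           \<le> 128 * (SUP g \<in> {g \<in> X. l1_norm mu g = 1}. ereal (\<integral> w. orliczM (tau * g w) \<partial>mu))"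
proof -
  interpret prob_space mu by fact
  define G where "G = {g \<in> X. l1_norm mu g = 1}"
  define S where "S = (SUP g \<in> G. ereal (\<integral> w. orliczM (tau * g w) \<partial>mu))"
  have intX: "integrable mu f" if "f \<in> X" for f using assms(2) that unfolding closed_L1_subspace_def by blast
  have scal: "(\<lambda>w. c * f w) \<in> X" if "f \<in> X" for f c using assms(2) that unfolding closed_L1_subspace_def by blast
  have key: "ereal (\<integral> w. Mf (tau * f w) \<partial>mu) \<le> S" if fX: "f \<in> X" and If: "(\<integral> w. Mf (f w) \<partial>mu) = 1" for f
  proof -
    have fi: "integrable mu f" using fX by (rule intX)
    define nf where "nf = (\<integral> w. \<bar>f w\<bar> \<partial>mu)"
    have nf1: "nf \<le> 1" unfolding nf_def by (rule l1_le1[OF assms(1) fi]) (use If in simp)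
    have nf0: "0 < nf"
    proof (rule ccontr)
      assume "\<not> 0 < nf"
      moreover have "0 \<le> nf" unfolding nf_def by simp
      ultimately have "nf = 0" by simp
      then have "AE w in mu. \<bar>f w\<bar> = 0"
        using integral_nonneg_eq_0_iff_AE[of mu "\<lambda>w. \<bar>f w\<bar>"] fi unfolding nf_def by simp
      then have "AE w in mu. Mf (f w) = 0" by auto
      then have "(\<integral> w. Mf (f w) \<partial>mu) = (\<integral> w. 0 \<partial>mu)" by (intro integral_cong_AE) (use fi in auto)
      then show False using If by simp
    qed
    define g where "g = (\<lambda>w. (1 / nf) * f w)"
    have gX: "g \<in> X" unfolding g_def using fX by (rule scal)
    have "l1_norm mu g = (\<integral> w. (1 / nf) * \<bar>f w\<bar> \<partial>mu)"
      unfolding l1_norm_def g_def using nf0 by (simp add: abs_mult)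
    also have "\<dots> = 1" using nf0 by (simp add: nf_def[symmetric])
    finally have gG: "g \<in> G" using gX by (simp add: G_def)
    have "(\<integral> w. Mf (tau * f w) \<partial>mu) \<le> (\<integral> w. Mf (tau * g w) \<partial>mu)"
    proof (rule integral_mono)
      show "integrable mu (\<lambda>w. Mf (tau * f w))" using fi by (intro int_Mf) simp
      show "integrable mu (\<lambda>w. Mf (tau * g w))" using fi by (intro int_Mf) (simp add: g_def)
      fix w
      have "\<bar>f w\<bar> * 1 \<le> \<bar>f w\<bar> * (1 / nf)" using nf0 nf1 by (intro mult_left_mono) auto
      then have "tau * (\<bar>f w\<bar> * 1) \<le> tau * (\<bar>f w\<bar> * (1 / nf))"
        by (rule mult_left_mono) (use assms(3) in auto)
      moreover have "\<bar>tau * g w\<bar> = tau * (\<bar>f w\<bar> * (1 / nf))" using assms(3) nf0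
        by (simp add: g_def abs_mult)
      ultimately have "\<bar>tau * f w\<bar> \<le> \<bar>tau * g w\<bar>" using assms(3) by (simp add: abs_mult)
      then show "Mf (tau * f w) \<le> Mf (tau * g w)" by (rule Mf_mono_abs)
    qed
    also have "ereal (\<integral> w. Mf (tau * g w) \<partial>mu) \<le> S"
      unfolding S_def using gG by (intro SUP_upper2[OF gG]) (simp add: orliczM_eq)
    finally show ?thesis by simp
  qed
  have "mod_smooth mu X tau \<le> 128 * S"
    unfolding mod_smooth_def
  proof (rule SUP_least)
    fix p assume "p \<in> {(x, y). x \<in> X \<and> y \<in> X \<and> lux_norm mu x = 1 \<and> lux_norm mu y = 1}"
    then obtain x y where p: "p = (x, y)" and xX: "x \<in> X" and yX: "y \<in> X"
      and nx: "lux_norm mu x = 1" and ny: "lux_norm mu y = 1" by auto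
    have ix: "integrable mu x" using xX by (rule intX)
    have iy: "integrable mu y" using yX by (rule intX)
    have Ix: "(\<integral> w. Mf (x w) \<partial>mu) = 1"
      using lux_one_le[OF assms(1) ix nx] lux_one_ge[OF assms(1) ix nx] by simp
    have Iy: "(\<integral> w. Mf (y w) \<partial>mu) = 1"
      using lux_one_le[OF assms(1) iy ny] lux_one_ge[OF assms(1) iy ny] by simp
    define s where "s = max (\<integral> w. Mf (tau * x w) \<partial>mu) (\<integral> w. Mf (tau * y w) \<partial>mu)"
    have r: "(lux_norm mu (\<lambda>w. x w + tau * y w) + lux_norm mu (\<lambda>w. x w - tau * y w)) / 2 - 1 \<le> 128 * s"
      by (rule rho_bound[OF assms(1) ix iy Ix Iy _ _ assms(3)]) (simp_all add: s_def)
    have sS: "ereal s \<le> S" unfolding s_def using key[OF xX Ix] key[OF yX Iy] by (simp add: max_def)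
    have "ereal ((lux_norm mu (\<lambda>w. x w + tau * y w) + lux_norm mu (\<lambda>w. x w - tau * y w)) / 2 - 1) \<le> ereal (128 * s)"
      using r by simp
    also have "\<dots> = 128 * ereal s" by simp
    also have "\<dots> \<le> 128 * S" using sS by (intro ereal_mult_left_mono) auto
    finally show "ereal ((lux_norm mu (\<lambda>w. fst p w + tau * snd p w) + lux_norm mu (\<lambda>w. fst p w - tau * snd p w)) / 2 - 1) \<le> 128 * S"
      using p by simp
  qed
  then show ?thesis by (simp add: S_def G_def)
qed

end
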